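(* Let $0<\beta<\frac13$ and let $S\subset\mathbb{R}$ be a Bernstein set. Then McMullen's absolute winning game with parameter $\beta$ and target set $S$ is not determined, i.e., neither Alice nor Bob has a winning strategy.
   Context: A Bernstein set is a set $S\subset\mathbb{R}$ that has nonempty intersection with every closed uncountable subset of $\mathbb{R}$ but contains no closed uncountable subset of $\mathbb{R}$. McMullen's absolute winning game with parameter $0<\beta<\frac13$ and target set $S$: Bob first chooses a compact interval $B_0$ of positive length. Alice then chooses an interval $A_0\subset B_0$ with $|A_0|=\beta|B_0|$. Bob then chooses a compact interval $B_1\subset B_0\setminus A_0$ with $|B_1|=\beta|B_0|$, and so on: for every $n\ge0$, $A_n\subset B_n$ with $|A_n|=\beta|B_n|$, and $B_{n+1}\subset B_n\setminus A_n$ with $|B_{n+1}|=\beta|B_n|$. Alice wins if $\bigcap_{n\ge0}B_n$ has nonempty intersection with $S$; otherwise Bob wins. Here $|I|$ denotes the length of an interval $I$. A strategy for a player is a rule specifying a legal move in every possible situation as a function of all previously chosen intervals; it is winning if it guarantees that player wins regardless of the opponent's moves. The game is determined on $S$ if one of the players has a winning strategy, and not determined otherwise. *)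

theory Defs
  imports "HOL-Analysis.Analysis"
begin

definition bernstein_set :: "real set \<Rightarrow> bool" where
  "bernstein_set S \<longleftrightarrow>
     (\<forall>C. closed C \<and> uncountable C \<longrightarrow> S \<inter> C \<noteq> {}) \<and>
     (\<forall>C. closed C \<and> uncountable C \<longrightarrow> \<not> C \<subseteq> S)"

definition ilen :: "real set \<Rightarrow> real" where
  "ilen I = Sup I - Inf I"

definition cpt_interval :: "real set \<Rightarrow> bool" where
  "cpt_interval I \<longleftrightarrow> (\<exists>a b. a < b \<and> I = {a..b})"

definition alice_move :: "real \<Rightarrow> real set \<Rightarrow> real set \<Rightarrow> bool" where
  "alice_move \<beta> B A \<longleftrightarrow> A \<noteq> {} \<and> is_interval A \<and> A \<subseteq> B \<and> ilen A = \<beta> * ilen B"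

definition bob_move :: "real \<Rightarrow> real set \<Rightarrow> real set \<Rightarrow> real set \<Rightarrow> bool" where
  "bob_move \<beta> B A B' \<longleftrightarrow> cpt_interval B' \<and> B' \<subseteq> B - A \<and> ilen B' = \<beta> * ilen B"

text \<open>The first n rounds (B_0, A_0, ..., A_{n-1}, B_n) are legal.\<close>
definition legal_upto :: "real \<Rightarrow> (nat \<Rightarrow> real set) \<Rightarrow> (nat \<Rightarrow> real set) \<Rightarrow> nat \<Rightarrow> bool" where
  "legal_upto \<beta> B A n \<longleftrightarrow> cpt_interval (B 0) \<and>
     (\<forall>i<n. alice_move \<beta> (B i) (A i) \<and> bob_move \<beta> (B i) (A i) (B (Suc i)))"

definition legal_play :: "real \<Rightarrow> (nat \<Rightarrow> real set) \<Rightarrow> (nat \<Rightarrow> real set) \<Rightarrow> bool" where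
  "legal_play \<beta> B A \<longleftrightarrow> (\<forall>n. legal_upto \<beta> B A n)"

definition hist :: "(nat \<Rightarrow> real set) \<Rightarrow> (nat \<Rightarrow> real set) \<Rightarrow> nat \<Rightarrow> real set list" where
  "hist B A n = concat (map (\<lambda>i. [B i, A i]) [0..<n])"

text \<open>Alice's strategies: from the history [B_0, A_0, ..., B_n] produce A_n;
  it must be legal in every legal position.\<close>
definition alice_strategy :: "real \<Rightarrow> (real set list \<Rightarrow> real set) \<Rightarrow> bool" where
  "alice_strategy \<beta> \<sigma> \<longleftrightarrow>
     (\<forall>B A n. legal_upto \<beta> B A n \<longrightarrow> alice_move \<beta> (B n) (\<sigma> (hist B A n @ [B n])))"

text \<open>Bob's strategies: from the history [] produce B_0, from [B_0, A_0, ..., B_n, A_n]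
  produce B_{n+1}; it must be legal in every legal position.\<close>
definition bob_strategy :: "real \<Rightarrow> (real set list \<Rightarrow> real set) \<Rightarrow> bool" where
  "bob_strategy \<beta> \<tau> \<longleftrightarrow> cpt_interval (\<tau> []) \<and>
     (\<forall>B A n. legal_upto \<beta> B A n \<and> alice_move \<beta> (B n) (A n) \<longrightarrow>
         bob_move \<beta> (B n) (A n) (\<tau> (hist B A (Suc n))))"

definition alice_winning :: "real \<Rightarrow> real set \<Rightarrow> (real set list \<Rightarrow> real set) \<Rightarrow> bool" where
  "alice_winning \<beta> S \<sigma> \<longleftrightarrow> alice_strategy \<beta> \<sigma> \<and>
     (\<forall>B A. legal_play \<beta> B A \<and> (\<forall>n. A n = \<sigma> (hist B A n @ [B n]))
        \<longrightarrow> (\<Inter>n. B n) \<inter> S \<noteq> {})"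

definition bob_winning :: "real \<Rightarrow> real set \<Rightarrow> (real set list \<Rightarrow> real set) \<Rightarrow> bool" where
  "bob_winning \<beta> S \<tau> \<longleftrightarrow> bob_strategy \<beta> \<tau> \<and>
     (\<forall>B A. legal_play \<beta> B A \<and> B 0 = \<tau> [] \<and> (\<forall>n. B (Suc n) = \<tau> (hist B A (Suc n)))
        \<longrightarrow> (\<Inter>n. B n) \<inter> S = {})"

definition abs_game_determined :: "real \<Rightarrow> real set \<Rightarrow> bool" where
  "abs_game_determined \<beta> S \<longleftrightarrow> (\<exists>\<sigma>. alice_winning \<beta> S \<sigma>) \<or> (\<exists>\<tau>. bob_winning \<beta> S \<tau>)"

end

theory Submission
  imports Defs
begin



lemma unc_bool_fun: "uncountable (UNIV :: (nat \<Rightarrow> bool) set)"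
proof -
  have "\<not> (\<exists>g::nat \<Rightarrow> (nat \<Rightarrow> bool). range g = UNIV)"
  proof
    assume "\<exists>g::nat \<Rightarrow> (nat \<Rightarrow> bool). range g = UNIV"
    then obtain g :: "nat \<Rightarrow> (nat \<Rightarrow> bool)" where g: "range g = UNIV" by blast
    have "(\<lambda>n. \<not> g n n) \<in> range g" using g by simp
    then obtain m where "g m = (\<lambda>n. \<not> g n n)" by auto
    then have "g m m = (\<not> g m m)" by metis
    then show False by simp
  qed
  then show ?thesis unfolding uncountable_def by blast
qed

lemma ilen_cc: "a \<le> b \<Longrightarrow> ilen {a..b} = b - a"
  by (simp add: ilen_def)

lemma cpt_interval_D: "cpt_interval I \<Longrightarrow> I = {Inf I..Sup I} \<and> Inf I < Sup I"
  unfolding cpt_interval_def by auto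

lemma hist_cong: "(\<And>i. i < m \<Longrightarrow> B i = B' i) \<Longrightarrow> (\<And>i. i < m \<Longrightarrow> A i = A' i) \<Longrightarrow> hist B A m = hist B' A' m"
  unfolding hist_def by (intro arg_cong[where f=concat] map_cong) auto

lemma legal_cong: "legal_upto \<beta> B' A' n' \<Longrightarrow> m \<le> n' \<Longrightarrow> (\<And>i. i \<le> m \<Longrightarrow> B i = B' i) \<Longrightarrow> (\<And>i. i < m \<Longrightarrow> A i = A' i) \<Longrightarrow> legal_upto \<beta> B A m"
  unfolding legal_upto_def by auto

lemma legal_box: "legal_upto \<beta> B A n \<Longrightarrow> cpt_interval (B n)"
  unfolding legal_upto_def bob_move_def by (cases n) auto

lemma legal_nest: "legal_upto \<beta> B A n \<Longrightarrow> i \<le> j \<Longrightarrow> j \<le> n \<Longrightarrow> B j \<subseteq> B i"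
proof (induction j)
  case 0 then show ?case by simp
next
  case (Suc j)
  then show ?case
  proof (cases "i = Suc j")
    case False
    then have "i \<le> j" using Suc by simp
    moreover have "j < n" using Suc.prems by simp
    then have "B (Suc j) \<subseteq> B j - A j" using Suc.prems(1) unfolding legal_upto_def bob_move_def by blast
    then have "B (Suc j) \<subseteq> B j" by blast
    ultimately show ?thesis using Suc by auto
  qed simp
qed




type_synonym pos = "(nat \<Rightarrow> real set) \<times> (nat \<Rightarrow> real set) \<times> nat"

definition pB :: "pos \<Rightarrow> nat \<Rightarrow> real set" where "pB P = fst P"
definition pA :: "pos \<Rightarrow> nat \<Rightarrow> real set" where "pA P = fst (snd P)"
definition lv :: "pos \<Rightarrow> nat" where "lv P = snd (snd P)"
definition bx :: "pos \<Rightarrow> real set" where "bx P = pB P (lv P)"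
definition legalP :: "real \<Rightarrow> pos \<Rightarrow> bool" where "legalP \<beta> P = legal_upto \<beta> (pB P) (pA P) (lv P)"

definition ext :: "pos \<Rightarrow> pos \<Rightarrow> bool" where
  "ext P Q \<longleftrightarrow> lv P < lv Q \<and> (\<forall>i\<le>lv P. pB Q i = pB P i) \<and> (\<forall>i<lv P. pA Q i = pA P i)"

lemma ext_trans: "ext P Q \<Longrightarrow> ext Q R \<Longrightarrow> ext P R"
  unfolding ext_def by auto

lemma ext_box: "legalP \<beta> Q \<Longrightarrow> ext P Q \<Longrightarrow> bx Q \<subseteq> bx P"
  unfolding ext_def bx_def legalP_def
  using legal_nest[of \<beta> "pB Q" "pA Q" "lv Q" "lv P" "lv Q"] by auto

lemma legalP_box: "legalP \<beta> P \<Longrightarrow> bx P = {Inf (bx P)..Sup (bx P)} \<and> Inf (bx P) < Sup (bx P)"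
  unfolding legalP_def bx_def using legal_box cpt_interval_D by blast

lemma legalP_compact: "legalP \<beta> P \<Longrightarrow> compact (bx P) \<and> bx P \<noteq> {}"
proof -
  assume "legalP \<beta> P"
  then have h: "bx P = {Inf (bx P)..Sup (bx P)}" "Inf (bx P) < Sup (bx P)" using legalP_box by blast+
  have "compact (bx P)" by (subst h(1)) (rule compact_Icc)
  moreover have "Inf (bx P) \<in> {Inf (bx P)..Sup (bx P)}" using h(2) by simp
  then have "bx P \<noteq> {}" using h(1) by auto
  ultimately show ?thesis by blast
qed

primrec Tr :: "(bool \<Rightarrow> pos \<Rightarrow> pos) \<Rightarrow> pos \<Rightarrow> bool list \<Rightarrow> pos" where
  "Tr ch P0 [] = P0"
| "Tr ch P0 (b # s) = ch b (Tr ch P0 s)"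

primrec pre :: "(nat \<Rightarrow> bool) \<Rightarrow> nat \<Rightarrow> bool list" where
  "pre f 0 = []"
| "pre f (Suc k) = f k # pre f k"

lemma length_pre[simp]: "length (pre f k) = k"
  by (induction k) auto

lemma pre_add: "\<exists>u. pre f (m + d) = u @ pre f m"
proof (induction d)
  case 0 then show ?case by simp
next
  case (Suc d)
  then obtain u where "pre f (m + d) = u @ pre f m" by blast
  then show ?case by (rule_tac x="f (m+d) # u" in exI) simp
qed

lemma pre_mono: "m \<le> n \<Longrightarrow> \<exists>u. pre f n = u @ pre f m"
  using pre_add[of f m "n - m"] by simp

locale tree =
  fixes \<beta> :: real and V :: "pos \<Rightarrow> bool" and ch :: "bool \<Rightarrow> pos \<Rightarrow> pos" and P0 :: pos
  assumes V0: "V P0"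
    and Vch: "\<And>P b. V P \<Longrightarrow> V (ch b P) \<and> ext P (ch b P)"
    and disj: "\<And>P. V P \<Longrightarrow> bx (ch True P) \<inter> bx (ch False P) = {}"
    and Vleg: "\<And>P. V P \<Longrightarrow> legalP \<beta> P"
begin

lemma TrV: "V (Tr ch P0 s)"
  by (induction s) (auto simp: V0 Vch)

lemma Tr_ext: "ext (Tr ch P0 s) (Tr ch P0 (b # s))"
  using Vch TrV by simp

lemma Tr_suffix: "bx (Tr ch P0 (u @ s)) \<subseteq> bx (Tr ch P0 s)"
proof (induction u)
  case Nil then show ?case by simp
next
  case (Cons b u)
  have "bx (Tr ch P0 ((b # u) @ s)) \<subseteq> bx (Tr ch P0 (u @ s))"
    using ext_box[OF Vleg[OF TrV] Tr_ext[of "u @ s" b]] by simp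
  then show ?case using Cons by blast
qed

lemma Tr_disj: "length s = length s' \<Longrightarrow> s \<noteq> s' \<Longrightarrow> bx (Tr ch P0 s) \<inter> bx (Tr ch P0 s') = {}"
proof (induction s arbitrary: s')
  case Nil then show ?case by simp
next
  case (Cons b u)
  then obtain b' u' where s': "s' = b' # u'" and len: "length u = length u'"
    by (cases s') auto
  show ?case
  proof (cases "u = u'")
    case True
    then have "b \<noteq> b'" using Cons s' by simp
    then show ?thesis using disj[OF TrV[of u]] s' True by (cases b) (auto simp: Int_commute)
  next
    case False
    then have "bx (Tr ch P0 u) \<inter> bx (Tr ch P0 u') = {}" using Cons.IH len by blast
    moreover have "bx (Tr ch P0 (b # u)) \<subseteq> bx (Tr ch P0 u)" using Tr_suffix[of "[b]" u] by simp
    moreover have "bx (Tr ch P0 (b' # u')) \<subseteq> bx (Tr ch P0 u')" using Tr_suffix[of "[b']" u'] by simp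
    ultimately show ?thesis using s' by blast
  qed
qed

definition CC :: "real set" where
  "CC = (\<Inter>k. \<Union>s\<in>{s. length s = k}. bx (Tr ch P0 s))"

lemma finite_len: "finite {s :: bool list. length s = k}"
  using finite_lists_length_eq[of "UNIV :: bool set" k] by simp

lemma CC_closed: "closed CC"
  unfolding CC_def
proof (intro closed_INT ballI closed_UN finite_len)
  fix k s assume "s \<in> {s :: bool list. length s = k}"
  show "closed (bx (Tr ch P0 s))" using legalP_compact[OF Vleg[OF TrV]] compact_imp_closed by blast
qed

lemma branch_nonempty: "(\<Inter>k. bx (Tr ch P0 (pre f k))) \<noteq> {}"
proof -
  have "\<Inter>(range (\<lambda>k. bx (Tr ch P0 (pre f k)))) \<noteq> {}"
  proof (rule compact_nest)
    fix n show "compact (bx (Tr ch P0 (pre f n)))" using legalP_compact[OF Vleg[OF TrV]] by blast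
    show "bx (Tr ch P0 (pre f n)) \<noteq> {}" using legalP_compact[OF Vleg[OF TrV]] by blast
  next
    fix m n :: nat assume "m \<le> n"
    then obtain u where "pre f n = u @ pre f m" using pre_mono by blast
    then show "bx (Tr ch P0 (pre f n)) \<subseteq> bx (Tr ch P0 (pre f m))" using Tr_suffix by simp
  qed
  then show ?thesis by simp
qed

lemma CC_uncountable: "uncountable CC"
proof
  assume cC: "countable CC"
  define g where "g f = (SOME x. x \<in> (\<Inter>k. bx (Tr ch P0 (pre f k))))" for f
  have g: "g f \<in> bx (Tr ch P0 (pre f k))" for f k
  proof -
    have "\<exists>x. x \<in> (\<Inter>k. bx (Tr ch P0 (pre f k)))" by (rule ex_in_conv[THEN iffD2, OF branch_nonempty])
    then have "g f \<in> (\<Inter>k. bx (Tr ch P0 (pre f k)))" unfolding g_def by (rule someI_ex)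
    then show ?thesis by simp
  qed
  have "g f \<in> CC" for f
    unfolding CC_def
  proof (rule INT_I)
    fix k :: nat
    show "g f \<in> (\<Union>s\<in>{s. length s = k}. bx (Tr ch P0 s))"
      by (rule UN_I[of "pre f k"]) (simp_all add: g)
  qed
  then have sub: "range g \<subseteq> CC" by blast
  have "inj g"
  proof
    fix f f' assume eq: "g f = g f'"
    show "f = f'"
    proof (rule ccontr)
      assume "f \<noteq> f'"
      then obtain k where k: "f k \<noteq> f' k" by blast
      then have ne: "pre f (Suc k) \<noteq> pre f' (Suc k)" by simp
      have le: "length (pre f (Suc k)) = length (pre f' (Suc k))" by (simp only: length_pre)
      have "bx (Tr ch P0 (pre f (Suc k))) \<inter> bx (Tr ch P0 (pre f' (Suc k))) = {}"
        using Tr_disj[OF le ne] .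
      moreover have "g f \<in> bx (Tr ch P0 (pre f (Suc k)))" by (rule g)
      moreover have "g f \<in> bx (Tr ch P0 (pre f' (Suc k)))" unfolding eq by (rule g)
      ultimately show False by blast
    qed
  qed
  have "countable (range g)" by (rule countable_subset[OF sub cC])
  then have "countable (UNIV :: (nat \<Rightarrow> bool) set)" by (rule countable_image_inj_on) (use \<open>inj g\<close> in simp)
  then show False using unc_bool_fun by blast
qed

lemma CC_branch: "x \<in> CC \<Longrightarrow> \<exists>f. \<forall>k. x \<in> bx (Tr ch P0 (pre f k))"
proof -
  assume x: "x \<in> CC"
  have "\<forall>k. \<exists>s. length s = k \<and> x \<in> bx (Tr ch P0 s)" using x unfolding CC_def by blast
  then have "\<exists>s. \<forall>k. length (s k) = k \<and> x \<in> bx (Tr ch P0 (s k))" by (rule choice)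
  then obtain s where s: "\<And>k. length (s k) = k \<and> x \<in> bx (Tr ch P0 (s k))" by blast
  have uniq: "t = s k" if "length t = k" "x \<in> bx (Tr ch P0 t)" for k t
  proof (rule ccontr)
    assume "t \<noteq> s k"
    then have "bx (Tr ch P0 t) \<inter> bx (Tr ch P0 (s k)) = {}" using Tr_disj s[of k] that by simp
    then show False using that s[of k] by blast
  qed
  have step: "s (Suc k) = hd (s (Suc k)) # s k" for k
  proof -
    obtain b u where bu: "s (Suc k) = b # u" using s[of "Suc k"] by (cases "s (Suc k)") auto
    then have "length u = k" using s[of "Suc k"] by simp
    moreover have "x \<in> bx (Tr ch P0 u)" using s[of "Suc k"] bu Tr_suffix[of "[b]" u] by auto
    ultimately have "u = s k" using uniq by blast
    then show ?thesis using bu by simp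
  qed
  define f where "f k = hd (s (Suc k))" for k
  have "pre f k = s k" for k
  proof (induction k)
    case 0 then show ?case using s[of 0] by simp
  next
    case (Suc k) then show ?case using step[of k] by (simp add: f_def)
  qed
  then show ?thesis using s by (intro exI[of _ f]) simp
qed

end

lemma chain_lv: "(\<And>k. ext (Q k) (Q (Suc k))) \<Longrightarrow> k \<le> lv (Q k)"
proof (induction k)
  case 0 then show ?case by simp
next
  case (Suc k)
  have "lv (Q k) < lv (Q (Suc k))" using Suc.prems[of k] unfolding ext_def by blast
  then show ?case using Suc by simp
qed

lemma chain_ext: "(\<And>k. ext (Q k) (Q (Suc k))) \<Longrightarrow> i < m \<Longrightarrow> ext (Q i) (Q m)"
proof (induction m)
  case 0 then show ?case by simp
next
  case (Suc m)
  show ?case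
  proof (cases "i = m")
    case True then show ?thesis using Suc.prems by simp
  next
    case False
    then have "i < m" using Suc.prems by simp
    then have "ext (Q i) (Q m)" using Suc.IH Suc.prems(1) by blast
    then show ?thesis using ext_trans Suc.prems(1)[of m] by blast
  qed
qed

lemma chain_limit:
  assumes ch: "\<And>k. ext (Q k) (Q (Suc k))"
  shows "m \<le> lv (Q m) \<and> (\<forall>i\<le>m. pB (Q i) i = pB (Q m) i) \<and> (\<forall>i<m. pA (Q (Suc i)) i = pA (Q m) i)"
proof (intro conjI allI impI)
  show "m \<le> lv (Q m)" using chain_lv ch by blast
next
  fix i assume "i \<le> m"
  show "pB (Q i) i = pB (Q m) i"
  proof (cases "i = m")
    case False
    then have "ext (Q i) (Q m)" using \<open>i \<le> m\<close> chain_ext ch by simp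
    moreover have "i \<le> lv (Q i)" using chain_lv ch by blast
    ultimately show ?thesis unfolding ext_def by simp
  qed simp
next
  fix i assume "i < m"
  show "pA (Q (Suc i)) i = pA (Q m) i"
  proof (cases "Suc i = m")
    case False
    then have "ext (Q (Suc i)) (Q m)" using \<open>i < m\<close> chain_ext ch by simp
    moreover have "Suc i \<le> lv (Q (Suc i))" using chain_lv ch by blast
    ultimately show ?thesis unfolding ext_def by simp
  qed simp
qed




lemma play_from_chain:
  assumes ch: "\<And>k. ext (Q k) (Q (Suc k))" and lg: "\<And>k. legalP \<beta> (Q k)"
  defines "LB \<equiv> \<lambda>i. pB (Q i) i" and "LA \<equiv> \<lambda>i. pA (Q (Suc i)) i"
  shows "legal_play \<beta> LB LA"
    and "\<And>i. bx (Q i) \<subseteq> LB i"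
    and "\<And>m. hist LB LA m = hist (pB (Q m)) (pA (Q m)) m"
    and "\<And>m. m \<le> lv (Q m)"
    and "\<And>m i. i \<le> m \<Longrightarrow> LB i = pB (Q m) i"
    and "\<And>m i. i < m \<Longrightarrow> LA i = pA (Q m) i"
proof -
  note cl = chain_limit[of Q, OF ch]
  show lvm: "\<And>m. m \<le> lv (Q m)" using cl by blast
  show agB: "\<And>m i. i \<le> m \<Longrightarrow> LB i = pB (Q m) i" using cl unfolding LB_def by blast
  show agA: "\<And>m i. i < m \<Longrightarrow> LA i = pA (Q m) i" using cl unfolding LA_def by blast
  show "\<And>m. hist LB LA m = hist (pB (Q m)) (pA (Q m)) m"
    by (rule hist_cong) (simp_all add: agB agA)
  show "legal_play \<beta> LB LA"
    unfolding legal_play_def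
  proof
    fix m
    show "legal_upto \<beta> LB LA m"
      using legal_cong[of \<beta> "pB (Q m)" "pA (Q m)" "lv (Q m)" m LB LA] lg[of m] lvm[of m] agB agA
      unfolding legalP_def by blast
  qed
  show "\<And>i. bx (Q i) \<subseteq> LB i"
    using legal_nest lg lvm unfolding LB_def bx_def legalP_def by blast
qed


definition validB :: "real \<Rightarrow> (real set list \<Rightarrow> real set) \<Rightarrow> pos \<Rightarrow> bool" where
  "validB \<beta> \<tau> P \<longleftrightarrow> legalP \<beta> P \<and> pB P 0 = \<tau> [] \<and>
     (\<forall>i<lv P. pB P (Suc i) = \<tau> (hist (pB P) (pA P) (Suc i)))"

definition nxtB :: "(real set list \<Rightarrow> real set) \<Rightarrow> pos \<Rightarrow> real set \<Rightarrow> pos" where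
  "nxtB \<tau> P A' = (case P of (B, A, n) \<Rightarrow>
     (B(Suc n := \<tau> (hist B (A(n := A')) (Suc n))), A(n := A'), Suc n))"

lemma nxtB_props:
  assumes bs: "bob_strategy \<beta> \<tau>" and v: "validB \<beta> \<tau> P" and am: "alice_move \<beta> (bx P) A'"
  shows "validB \<beta> \<tau> (nxtB \<tau> P A') \<and> ext P (nxtB \<tau> P A') \<and> bob_move \<beta> (bx P) A' (bx (nxtB \<tau> P A'))"
proof -
  obtain B A n where P: "P = (B, A, n)" by (cases P) auto
  define A2 where "A2 = A(n := A')"
  define X where "X = \<tau> (hist B A2 (Suc n))"
  define B3 where "B3 = B(Suc n := X)"
  have nx: "nxtB \<tau> P A' = (B3, A2, Suc n)" unfolding nxtB_def P A2_def B3_def X_def by simp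
  have lg: "legal_upto \<beta> B A n" using v P unfolding validB_def legalP_def pB_def pA_def lv_def by simp
  have cons: "\<And>i. i < n \<Longrightarrow> B (Suc i) = \<tau> (hist B A (Suc i))" and B0: "B 0 = \<tau> []"
    using v P unfolding validB_def pB_def pA_def lv_def by auto
  have amn: "alice_move \<beta> (B n) A'" using am P unfolding bx_def pB_def lv_def by simp
  have lg2: "legal_upto \<beta> B A2 n" using legal_cong[OF lg, of n B A2] unfolding A2_def by simp
  have "legal_upto \<beta> B A2 n \<and> alice_move \<beta> (B n) (A2 n)" using lg2 amn by (simp add: A2_def)
  then have "bob_move \<beta> (B n) (A2 n) (\<tau> (hist B A2 (Suc n)))" using bs unfolding bob_strategy_def by blast
  then have bm: "bob_move \<beta> (B n) A' X" by (simp add: X_def A2_def)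
  have lg3: "legal_upto \<beta> B3 A2 (Suc n)"
    unfolding legal_upto_def
  proof (intro conjI allI impI)
    show "cpt_interval (B3 0)" using lg unfolding B3_def legal_upto_def by simp
  next
    fix i assume i: "i < Suc n"
    show "alice_move \<beta> (B3 i) (A2 i)"
      using i lg amn unfolding B3_def A2_def legal_upto_def by (cases "i = n") auto
    show "bob_move \<beta> (B3 i) (A2 i) (B3 (Suc i))"
      using i lg bm unfolding B3_def A2_def legal_upto_def by (cases "i = n") auto
  qed
  have c3: "B3 (Suc i) = \<tau> (hist B3 A2 (Suc i))" if i: "i < Suc n" for i
  proof (cases "i = n")
    case True
    have "hist B3 A2 (Suc n) = hist B A2 (Suc n)" by (rule hist_cong) (auto simp: B3_def)
    then show ?thesis using True unfolding B3_def X_def by simp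
  next
    case False
    then have "i < n" using i by simp
    have "hist B3 A2 (Suc i) = hist B A (Suc i)" by (rule hist_cong) (use \<open>i < n\<close> in \<open>auto simp: B3_def A2_def\<close>)
    then show ?thesis using cons[OF \<open>i < n\<close>] \<open>i < n\<close> unfolding B3_def by simp
  qed
  have "validB \<beta> \<tau> (B3, A2, Suc n)"
    unfolding validB_def legalP_def pB_def pA_def lv_def using lg3 c3 B0 by (simp add: B3_def)
  moreover have "ext P (B3, A2, Suc n)"
    unfolding ext_def P pB_def pA_def lv_def by (simp add: B3_def A2_def)
  moreover have "bob_move \<beta> (bx P) A' (bx (B3, A2, Suc n))"
    using bm P unfolding bx_def pB_def lv_def B3_def by simp
  ultimately show ?thesis unfolding nx by blast
qed

definition A0 :: "real \<Rightarrow> real set \<Rightarrow> real set" where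
  "A0 \<beta> I = {Inf I .. Inf I + \<beta> * (Sup I - Inf I)}"

lemma A0_move:
  assumes "0 < \<beta>" "\<beta> < 1" "cpt_interval I"
  shows "alice_move \<beta> I (A0 \<beta> I)"
proof -
  obtain a b where ab: "a < b" "I = {a..b}" using assms(3) unfolding cpt_interval_def by blast
  have s: "Inf I = a" "Sup I = b" using ab by auto
  have "\<beta> * (b - a) \<le> 1 * (b - a)" by (rule mult_right_mono) (use assms ab in auto)
  then have le1: "a + \<beta> * (b - a) \<le> b" by simp
  have le0: "a \<le> a + \<beta> * (b - a)" using assms ab by simp
  show ?thesis unfolding alice_move_def A0_def s
    using le1 le0 ab by (auto simp: ilen_def is_interval_cc)
qed

lemma move_is_alice:
  assumes "bob_move \<beta> I A X"
  shows "alice_move \<beta> I X"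
proof -
  obtain a b where ab: "a < b" "X = {a..b}" using assms unfolding bob_move_def cpt_interval_def by blast
  then show ?thesis using assms unfolding alice_move_def bob_move_def by (auto simp: is_interval_cc)
qed

definition chB :: "real \<Rightarrow> (real set list \<Rightarrow> real set) \<Rightarrow> bool \<Rightarrow> pos \<Rightarrow> pos" where
  "chB \<beta> \<tau> b P = (if b then nxtB \<tau> P (bx (nxtB \<tau> P (A0 \<beta> (bx P)))) else nxtB \<tau> P (A0 \<beta> (bx P)))"

lemma bob_tree:
  assumes bs: "bob_strategy \<beta> \<tau>" and b0: "0 < \<beta>" "\<beta> < 1"
  shows "tree \<beta> (validB \<beta> \<tau>) (chB \<beta> \<tau>) (\<lambda>_. \<tau> [], \<lambda>_. {}, 0)"
proof
  show "validB \<beta> \<tau> (\<lambda>_. \<tau> [], \<lambda>_. {}, 0)"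
    using bs unfolding validB_def legalP_def legal_upto_def bob_strategy_def pB_def pA_def lv_def by simp
next
  fix P assume v: "validB \<beta> \<tau> P"
  then show "legalP \<beta> P" unfolding validB_def by simp
  have cp: "cpt_interval (bx P)" using v legal_box unfolding validB_def legalP_def bx_def by blast
  have m0: "alice_move \<beta> (bx P) (A0 \<beta> (bx P))" using A0_move[OF b0 cp] .
  note n0 = nxtB_props[OF bs v m0]
  have m1: "alice_move \<beta> (bx P) (bx (nxtB \<tau> P (A0 \<beta> (bx P))))" using n0 move_is_alice by blast
  note n1 = nxtB_props[OF bs v m1]
  fix b
  show "validB \<beta> \<tau> (chB \<beta> \<tau> b P) \<and> ext P (chB \<beta> \<tau> b P)"
    using n0 n1 unfolding chB_def by (cases b) auto
  show "bx (chB \<beta> \<tau> True P) \<inter> bx (chB \<beta> \<tau> False P) = {}"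
    using n1 unfolding chB_def bob_move_def by auto
qed

lemma bob_not_winning:
  assumes b0: "0 < \<beta>" "\<beta> < 1" and bern: "bernstein_set S"
  shows "\<not> bob_winning \<beta> S \<tau>"
proof
  assume bw: "bob_winning \<beta> S \<tau>"
  then have bs: "bob_strategy \<beta> \<tau>" unfolding bob_winning_def by blast
  interpret T: tree \<beta> "validB \<beta> \<tau>" "chB \<beta> \<tau>" "(\<lambda>_. \<tau> [], \<lambda>_. {}, 0)"
    by (rule bob_tree[OF bs b0])
  have H: "\<forall>C. closed C \<and> uncountable C \<longrightarrow> S \<inter> C \<noteq> {}" using bern unfolding bernstein_set_def by (rule conjunct1)
  have "S \<inter> T.CC \<noteq> {}" using H[rule_format, of T.CC] T.CC_closed T.CC_uncountable by blast
  then obtain x where x: "x \<in> S" "x \<in> T.CC" by blast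
  obtain f where f: "\<And>k. x \<in> bx (Tr (chB \<beta> \<tau>) (\<lambda>_. \<tau> [], \<lambda>_. {}, 0) (pre f k))"
    using T.CC_branch[OF x(2)] by blast
  define Q where "Q k = Tr (chB \<beta> \<tau>) (\<lambda>_. \<tau> [], \<lambda>_. {}, 0) (pre f k)" for k
  have ch: "\<And>k. ext (Q k) (Q (Suc k))" unfolding Q_def using T.Tr_ext by simp
  have vQ: "\<And>k. validB \<beta> \<tau> (Q k)" unfolding Q_def using T.TrV by simp
  have lg: "\<And>k. legalP \<beta> (Q k)" using vQ unfolding validB_def by blast
  define LB where "LB \<equiv> \<lambda>i. pB (Q i) i"
  define LA where "LA \<equiv> \<lambda>i. pA (Q (Suc i)) i"
  note pl = play_from_chain[of Q \<beta>, OF ch lg, folded LB_def LA_def]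
  have B0: "LB 0 = \<tau> []" using vQ[of 0] unfolding LB_def validB_def by simp
  have BS: "LB (Suc n) = \<tau> (hist LB LA (Suc n))" for n
  proof -
    have "n < lv (Q (Suc n))" using pl(4)[of "Suc n"] by simp
    then have "pB (Q (Suc n)) (Suc n) = \<tau> (hist (pB (Q (Suc n))) (pA (Q (Suc n))) (Suc n))"
      using vQ[of "Suc n"] unfolding validB_def by blast
    then show ?thesis using pl(3)[of "Suc n"] unfolding LB_def by simp
  qed
  have xin: "x \<in> LB n" for n
  proof -
    have "bx (Q n) \<subseteq> LB n" using pl(2)[of n] by (simp add: LB_def)
    moreover have "x \<in> bx (Q n)" unfolding Q_def by (rule f)
    ultimately show ?thesis by blast
  qed
  have "x \<in> (\<Inter>n. LB n)" by (simp add: xin)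
  then have ne: "(\<Inter>n. LB n) \<inter> S \<noteq> {}" using x by blast
  have H2: "\<forall>B A. legal_play \<beta> B A \<and> B 0 = \<tau> [] \<and> (\<forall>n. B (Suc n) = \<tau> (hist B A (Suc n)))
        \<longrightarrow> (\<Inter>n. B n) \<inter> S = {}" using bw unfolding bob_winning_def by (rule conjunct2)
  have BS': "\<forall>n. LB (Suc n) = \<tau> (hist LB LA (Suc n))" using BS by blast
  have prem: "legal_play \<beta> LB LA \<and> LB 0 = \<tau> [] \<and> (\<forall>n. LB (Suc n) = \<tau> (hist LB LA (Suc n)))"
    using pl(1) B0 BS' by blast
  have "(\<Inter>n. LB n) \<inter> S = {}" using H2 prem by blast
  then show False using ne by blast
qed





lemma alice_bounds:
  assumes am: "alice_move \<beta> {a..b} A" and ab: "a < b"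
  shows "a \<le> Inf A" "Sup A \<le> b" "Sup A - Inf A = \<beta> * (b - a)"
    and "\<And>x. x \<in> A \<Longrightarrow> Inf A \<le> x \<and> x \<le> Sup A"
    and "\<And>y. Inf A < y \<Longrightarrow> y < Sup A \<Longrightarrow> y \<in> A"
proof -
  have ne: "A \<noteq> {}" and sub: "A \<subseteq> {a..b}" and iv: "is_interval A" and il: "ilen A = \<beta> * ilen {a..b}"
    using am unfolding alice_move_def by auto
  have bb: "bdd_below A" using sub by (meson atLeastAtMost_iff bdd_below_def subset_iff)
  have ba: "bdd_above A" using sub by (meson atLeastAtMost_iff bdd_above_def subset_iff)
  show "a \<le> Inf A" using ne sub by (intro cInf_greatest) auto
  show "Sup A \<le> b" using ne sub by (intro cSup_least) auto
  show "Sup A - Inf A = \<beta> * (b - a)" using il ab unfolding ilen_def by simp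
  show "\<And>x. x \<in> A \<Longrightarrow> Inf A \<le> x \<and> x \<le> Sup A" using bb ba by (simp add: cInf_lower cSup_upper)
  fix y assume y1: "Inf A < y" and y2: "y < Sup A"
  obtain x1 where x1: "x1 \<in> A" "x1 < y" using y1 cInf_less_iff[OF ne bb] by blast
  obtain x2 where x2: "x2 \<in> A" "y < x2" using y2 less_cSup_iff[OF ne ba] by blast
  show "y \<in> A" using iv x1 x2 unfolding is_interval_1 by (meson less_imp_le)
qed

lemma box_ok:
  assumes am: "alice_move \<beta> {a..b} A" and ab: "a < b" and b0: "0 < \<beta>"
    and c: "a \<le> c" "c + \<beta> * (b - a) \<le> b" "c + \<beta> * (b - a) < Inf A \<or> Sup A < c"
  shows "bob_move \<beta> {a..b} A {c..c + \<beta> * (b - a)}"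
proof -
  note bd = alice_bounds[OF am ab]
  have pos: "0 < \<beta> * (b - a)" using ab b0 by simp
  have "cpt_interval {c..c + \<beta> * (b - a)}" unfolding cpt_interval_def using pos
    by (intro exI[of _ c] exI[of _ "c + \<beta> * (b - a)"]) simp
  moreover have "{c..c + \<beta> * (b - a)} \<subseteq> {a..b} - A"
  proof
    fix y assume y: "y \<in> {c..c + \<beta> * (b - a)}"
    have "y \<notin> A"
    proof
      assume "y \<in> A"
      then have "Inf A \<le> y \<and> y \<le> Sup A" using bd(4) by blast
      then show False using y c(3) by auto
    qed
    then show "y \<in> {a..b} - A" using y c by auto
  qed
  moreover have "ilen {c..c + \<beta> * (b - a)} = \<beta> * ilen {a..b}"
    using pos ab by (simp add: ilen_def)
  ultimately show ?thesis unfolding bob_move_def by blast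
qed

lemma geom:
  assumes b0: "0 < \<beta>" and b3: "\<beta> < 1/3" and ab: "a < b" and am: "alice_move \<beta> {a..b} A"
    and p: "a \<le> p" "p \<le> b"
  defines "w \<equiv> (1 - 3 * \<beta>) / 2"
  shows "(\<exists>X. bob_move \<beta> {a..b} A X \<and> p \<notin> X)
    \<or> (w * (b - a) \<le> p - a \<and> p - a \<le> \<beta> * (b - a) \<and>
        (\<forall>c. a \<le> c \<and> c \<le> a + w * (b - a) \<longrightarrow> bob_move \<beta> {a..b} A {c..c + \<beta> * (b - a)}))
    \<or> (w * (b - a) \<le> b - p \<and> b - p \<le> \<beta> * (b - a) \<and>
        (\<forall>c. b - \<beta> * (b - a) - w * (b - a) \<le> c \<and> c \<le> b - \<beta> * (b - a) \<longrightarrow> bob_move \<beta> {a..b} A {c..c + \<beta> * (b - a)}))"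
proof -
  define L where "L = b - a"
  have L0: "0 < L" using ab L_def by simp
  note bd = alice_bounds[OF am ab, folded L_def]
  define \<alpha> where "\<alpha> = Inf A"
  define \<alpha>' where "\<alpha>' = Sup A"
  have a1: "a \<le> \<alpha>" "\<alpha>' \<le> b" "\<alpha>' - \<alpha> = \<beta> * L" using bd unfolding \<alpha>_def \<alpha>'_def by auto
  have w0: "0 < w" "w + \<beta> < 1 - 2 * \<beta>" using b3 unfolding w_def by (auto simp: field_simps)
  have wL: "0 < w * L" using w0 L0 by simp
  have bL: "0 < \<beta> * L" using b0 L0 by simp
  have wLb: "w * L + \<beta> * L < L - 2 * (\<beta> * L)"
  proof -
    have "(w + \<beta>) * L < (1 - 2 * \<beta>) * L" using w0(2) L0 by (rule mult_strict_right_mono)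
    then show ?thesis by (simp add: algebra_simps)
  qed
  have bL3: "3 * (\<beta> * L) < L" using wLb wL by linarith
  have ok: "bob_move \<beta> {a..b} A {c..c + \<beta> * (b - a)}"
    if "a \<le> c" "c + \<beta> * L \<le> b" "c + \<beta> * L < \<alpha> \<or> \<alpha>' < c" for c
    using box_ok[OF am ab b0] that unfolding L_def \<alpha>_def \<alpha>'_def by blast
  show ?thesis
  proof (cases "p \<in> A")
    case True
    have "\<alpha> - a > \<beta> * L \<or> b - \<alpha>' > \<beta> * L" using a1 bL3 L_def by linarith
    then show ?thesis
    proof
      assume h: "\<alpha> - a > \<beta> * L"
      have "bob_move \<beta> {a..b} A {a..a + \<beta> * (b - a)}" using ok[of a] h a1 L_def by simp
      moreover have "p \<notin> {a..a + \<beta> * (b - a)}" using True h bd(4) \<alpha>_def L_def by fastforce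
      ultimately show ?thesis by blast
    next
      assume h: "b - \<alpha>' > \<beta> * L"
      have "bob_move \<beta> {a..b} A {b - \<beta> * L..b - \<beta> * L + \<beta> * (b - a)}" using ok[of "b - \<beta> * L"] h a1 bL3 L_def by simp
      moreover have "p \<notin> {b - \<beta> * L..b - \<beta> * L + \<beta> * (b - a)}" using True h bd(4) \<alpha>'_def L_def by fastforce
      ultimately show ?thesis by blast
    qed
  next
    case False
    have "p \<le> \<alpha> \<or> \<alpha>' \<le> p"
    proof (rule ccontr)
      assume "\<not> (p \<le> \<alpha> \<or> \<alpha>' \<le> p)"
      then have "Inf A < p" "p < Sup A" using \<alpha>_def \<alpha>'_def by auto
      then have "p \<in> A" by (rule bd(5))
      with False show False by simp
    qed
    then show ?thesis
    proof
      assume pl: "p \<le> \<alpha>"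
      show ?thesis
      proof (cases "b - \<alpha>' > \<beta> * L")
        case True
        have "bob_move \<beta> {a..b} A {b - \<beta> * L..b - \<beta> * L + \<beta> * (b - a)}" using ok[of "b - \<beta> * L"] True a1 bL3 L_def by simp
        moreover have "p \<notin> {b - \<beta> * L..b - \<beta> * L + \<beta> * (b - a)}" using True pl a1 bL by auto
        ultimately show ?thesis by blast
      next
        case False
        have gap: "\<alpha> - a \<ge> L - 2 * (\<beta> * L)" using False a1 L_def by linarith
        have allok: "\<forall>c. a \<le> c \<and> c \<le> a + w * (b - a) \<longrightarrow> bob_move \<beta> {a..b} A {c..c + \<beta> * (b - a)}"
        proof (intro allI impI)
          fix c assume c: "a \<le> c \<and> c \<le> a + w * (b - a)"
          show "bob_move \<beta> {a..b} A {c..c + \<beta> * (b - a)}"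
            using ok[of c] c gap wLb L_def a1 by simp
        qed
        show ?thesis
        proof (cases "p - a < w * L")
          case True
          have "bob_move \<beta> {a..b} A {a + w * L..a + w * L + \<beta> * (b - a)}" using allok[rule_format, of "a + w * L"] wL L_def by simp
          moreover have "p \<notin> {a + w * L..a + w * L + \<beta> * (b - a)}" using True by auto
          ultimately show ?thesis by blast
        next
          case f2: False
          show ?thesis
          proof (cases "p - a > \<beta> * L")
            case True
            have "bob_move \<beta> {a..b} A {a..a + \<beta> * (b - a)}" using allok[rule_format, of a] wL L_def by simp
            moreover have "p \<notin> {a..a + \<beta> * (b - a)}" using True L_def by auto
            ultimately show ?thesis by blast
          next
            case False
            then show ?thesis using f2 allok L_def by auto
          qed
        qed
      qed
    next
      assume pr: "\<alpha>' \<le> p"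
      show ?thesis
      proof (cases "\<alpha> - a > \<beta> * L")
        case True
        have "bob_move \<beta> {a..b} A {a..a + \<beta> * (b - a)}" using ok[of a] True a1 L_def by simp
        moreover have "p \<notin> {a..a + \<beta> * (b - a)}" using True pr a1 bL L_def by auto
        ultimately show ?thesis by blast
      next
        case False
        have gap: "b - \<alpha>' \<ge> L - 2 * (\<beta> * L)" using False a1 L_def by linarith
        have allok: "\<forall>c. b - \<beta> * (b - a) - w * (b - a) \<le> c \<and> c \<le> b - \<beta> * (b - a) \<longrightarrow> bob_move \<beta> {a..b} A {c..c + \<beta> * (b - a)}"
        proof (intro allI impI)
          fix c assume c: "b - \<beta> * (b - a) - w * (b - a) \<le> c \<and> c \<le> b - \<beta> * (b - a)"
          show "bob_move \<beta> {a..b} A {c..c + \<beta> * (b - a)}"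
            using ok[of c] c gap wLb L_def a1 bL3 by simp
        qed
        show ?thesis
        proof (cases "b - p < w * L")
          case True
          have "bob_move \<beta> {a..b} A {b - \<beta> * L - w * L..b - \<beta> * L - w * L + \<beta> * (b - a)}" using allok[rule_format, of "b - \<beta> * L - w * L"] wL L_def by simp
          moreover have "p \<notin> {b - \<beta> * L - w * L..b - \<beta> * L - w * L + \<beta> * (b - a)}" using True L_def by auto
          ultimately show ?thesis by blast
        next
          case f2: False
          show ?thesis
          proof (cases "b - p > \<beta> * L")
            case True
            have "bob_move \<beta> {a..b} A {b - \<beta> * L..b - \<beta> * L + \<beta> * (b - a)}" using allok[rule_format, of "b - \<beta> * L"] wL L_def by simp
            moreover have "p \<notin> {b - \<beta> * L..b - \<beta> * L + \<beta> * (b - a)}" using True L_def by auto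
            ultimately show ?thesis by blast
          next
            case False
            then show ?thesis using f2 allok L_def by auto
          qed
        qed
      qed
    qed
  qed
qed




definition validA :: "real \<Rightarrow> (real set list \<Rightarrow> real set) \<Rightarrow> pos \<Rightarrow> bool" where
  "validA \<beta> \<sigma> P \<longleftrightarrow> legalP \<beta> P \<and> (\<forall>i<lv P. pA P i = \<sigma> (hist (pB P) (pA P) i @ [pB P i]))"

definition amove :: "(real set list \<Rightarrow> real set) \<Rightarrow> pos \<Rightarrow> real set" where
  "amove \<sigma> P = \<sigma> (hist (pB P) (pA P) (lv P) @ [bx P])"

definition stepA :: "(real set list \<Rightarrow> real set) \<Rightarrow> pos \<Rightarrow> real set \<Rightarrow> pos" where
  "stepA \<sigma> P X = (case P of (B, A, n) \<Rightarrow> (B(Suc n := X), A(n := \<sigma> (hist B A n @ [B n])), Suc n))"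

lemma amove_legal:
  assumes st: "alice_strategy \<beta> \<sigma>" and v: "validA \<beta> \<sigma> P"
  shows "alice_move \<beta> (bx P) (amove \<sigma> P)"
  using st v unfolding alice_strategy_def validA_def legalP_def amove_def bx_def by blast

lemma stepA_props:
  assumes st: "alice_strategy \<beta> \<sigma>" and v: "validA \<beta> \<sigma> P" and bm: "bob_move \<beta> (bx P) (amove \<sigma> P) X"
  shows "validA \<beta> \<sigma> (stepA \<sigma> P X) \<and> ext P (stepA \<sigma> P X) \<and> bx (stepA \<sigma> P X) = X"
proof -
  obtain B A n where P: "P = (B, A, n)" by (cases P) auto
  define Aa where "Aa = \<sigma> (hist B A n @ [B n])"
  define A2 where "A2 = A(n := Aa)"
  define B3 where "B3 = B(Suc n := X)"
  have nx: "stepA \<sigma> P X = (B3, A2, Suc n)" unfolding stepA_def P A2_def B3_def Aa_def by simp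
  have lg: "legal_upto \<beta> B A n" using v P unfolding validA_def legalP_def pB_def pA_def lv_def by simp
  have cons: "\<And>i. i < n \<Longrightarrow> A i = \<sigma> (hist B A i @ [B i])"
    using v P unfolding validA_def pB_def pA_def lv_def by auto
  have amn: "alice_move \<beta> (B n) Aa" using amove_legal[OF st v] P unfolding amove_def bx_def pB_def pA_def lv_def Aa_def by simp
  have bmn: "bob_move \<beta> (B n) Aa X" using bm P unfolding amove_def bx_def pB_def pA_def lv_def Aa_def by simp
  have lg3: "legal_upto \<beta> B3 A2 (Suc n)"
    unfolding legal_upto_def
  proof (intro conjI allI impI)
    show "cpt_interval (B3 0)" using lg unfolding B3_def legal_upto_def by simp
  next
    fix i assume i: "i < Suc n"
    show "alice_move \<beta> (B3 i) (A2 i)"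
      using i lg amn unfolding B3_def A2_def legal_upto_def by (cases "i = n") auto
    show "bob_move \<beta> (B3 i) (A2 i) (B3 (Suc i))"
      using i lg bmn unfolding B3_def A2_def legal_upto_def by (cases "i = n") auto
  qed
  have c3: "A2 i = \<sigma> (hist B3 A2 i @ [B3 i])" if i: "i < Suc n" for i
  proof -
    have h: "hist B3 A2 i = hist B A i" by (rule hist_cong) (use i in \<open>auto simp: B3_def A2_def\<close>)
    have b: "B3 i = B i" using i by (simp add: B3_def)
    show ?thesis
    proof (cases "i = n")
      case True
      then show ?thesis using h b by (simp add: A2_def Aa_def)
    next
      case False
      then have "i < n" using i by simp
      then show ?thesis using h b cons[OF \<open>i < n\<close>] by (simp add: A2_def)
    qed
  qed
  have "validA \<beta> \<sigma> (B3, A2, Suc n)"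
    unfolding validA_def legalP_def pB_def pA_def lv_def using lg3 c3 by simp
  moreover have "ext P (B3, A2, Suc n)"
    unfolding ext_def P pB_def pA_def lv_def by (simp add: B3_def A2_def)
  moreover have "bx (B3, A2, Suc n) = X"
    unfolding bx_def pB_def lv_def B3_def by simp
  ultimately show ?thesis unfolding nx by blast
qed

primrec Stuck :: "real \<Rightarrow> (real set list \<Rightarrow> real set) \<Rightarrow> real \<Rightarrow> nat \<Rightarrow> pos \<Rightarrow> bool" where
  "Stuck \<beta> \<sigma> p 0 P = (validA \<beta> \<sigma> P \<and> p \<in> bx P)"
| "Stuck \<beta> \<sigma> p (Suc k) P = (validA \<beta> \<sigma> P \<and> p \<in> bx P \<and>
     (\<forall>X. bob_move \<beta> (bx P) (amove \<sigma> P) X \<longrightarrow> Stuck \<beta> \<sigma> p k (stepA \<sigma> P X)))"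

lemma Stuck_D: "Stuck \<beta> \<sigma> p k P \<Longrightarrow> validA \<beta> \<sigma> P \<and> p \<in> bx P"
  by (cases k) auto

definition co :: "real \<Rightarrow> pos \<Rightarrow> real" where
  "co p P = (p - Inf (bx P)) / (Sup (bx P) - Inf (bx P))"

definition NN :: "real \<Rightarrow> (real set list \<Rightarrow> real set) \<Rightarrow> real \<Rightarrow> nat \<Rightarrow> real set" where
  "NN \<beta> \<sigma> p k = {co p P | P. Stuck \<beta> \<sigma> p k P}"

lemma NN_01: "t \<in> NN \<beta> \<sigma> p k \<Longrightarrow> 0 \<le> t \<and> t \<le> 1"
proof -
  assume "t \<in> NN \<beta> \<sigma> p k"
  then obtain P where P: "t = co p P" "Stuck \<beta> \<sigma> p k P" unfolding NN_def by blast
  have v: "legalP \<beta> P" "p \<in> bx P" using Stuck_D[OF P(2)] unfolding validA_def by auto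
  note bb = legalP_box[OF v(1)]
  have "Inf (bx P) \<le> p" "p \<le> Sup (bx P)" using v(2) bb by (metis atLeastAtMost_iff)+
  then show ?thesis using bb P(1) unfolding co_def by (simp add: divide_le_eq_1)
qed

lemma div_le_iff1: "0 < (\<beta>::real) \<Longrightarrow> (y \<le> e / \<beta> + f) \<longleftrightarrow> (\<beta> * y \<le> e + \<beta> * f)"
  by (simp add: field_simps)

lemma div_le_iff2: "0 < (\<beta>::real) \<Longrightarrow> (e / \<beta> + f \<le> y) \<longleftrightarrow> (e + \<beta> * f \<le> \<beta> * y)"
  by (simp add: field_simps)




locale actx =
  fixes \<beta> :: real and \<sigma> :: "real set list \<Rightarrow> real set"
  assumes b0: "0 < \<beta>" and b3: "\<beta> < 1/3" and strat: "alice_strategy \<beta> \<sigma>"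
begin

definition w :: real where "w = (1 - 3 * \<beta>) / 2"

lemma w_pos: "0 < w" using b3 unfolding w_def by simp

lemma stuck_step:
  assumes t: "t \<in> NN \<beta> \<sigma> p (Suc k)"
  shows "(w \<le> t \<and> t \<le> \<beta> \<and> (\<forall>y. t / \<beta> - w / \<beta> \<le> y \<and> y \<le> t / \<beta> \<longrightarrow> y \<in> NN \<beta> \<sigma> p k))
       \<or> (1 - \<beta> \<le> t \<and> t \<le> 1 - w \<and> (\<forall>y. 1 - (1 - t) / \<beta> \<le> y \<and> y \<le> 1 - (1 - t) / \<beta> + w / \<beta> \<longrightarrow> y \<in> NN \<beta> \<sigma> p k))"
proof -
  obtain P where P: "t = co p P" "Stuck \<beta> \<sigma> p (Suc k) P" using t unfolding NN_def by blast
  have v: "validA \<beta> \<sigma> P" "p \<in> bx P" using Stuck_D[OF P(2)] by auto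
  have lg: "legalP \<beta> P" using v unfolding validA_def by blast
  define a where "a = Inf (bx P)"
  define b where "b = Sup (bx P)"
  define L where "L = b - a"
  have box: "bx P = {a..b}" "a < b" using legalP_box[OF lg] unfolding a_def b_def by auto
  have L0: "0 < L" using box L_def by simp
  have bL: "0 < \<beta> * L" using b0 L0 by simp
  have pab: "a \<le> p" "p \<le> b" using v(2) box by auto
  have tdef: "t = (p - a) / L" using P(1) unfolding co_def a_def b_def L_def by simp
  have tL: "t * L = p - a" using tdef L0 by simp
  have am: "alice_move \<beta> {a..b} (amove \<sigma> P)" using amove_legal[OF strat v(1)] box by simp
  have st: "\<forall>X. bob_move \<beta> {a..b} (amove \<sigma> P) X \<longrightarrow> Stuck \<beta> \<sigma> p k (stepA \<sigma> P X)"
    using P(2) box by simp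
  have stepX: "co p (stepA \<sigma> P {c..c + \<beta> * L}) \<in> NN \<beta> \<sigma> p k"
    if "bob_move \<beta> {a..b} (amove \<sigma> P) {c..c + \<beta> * L}" for c
  proof -
    have "Stuck \<beta> \<sigma> p k (stepA \<sigma> P {c..c + \<beta> * L})" using st that by blast
    then show ?thesis unfolding NN_def by blast
  qed
  have coX: "co p (stepA \<sigma> P {c..c + \<beta> * L}) = (p - c) / (\<beta> * L)"
    if "bob_move \<beta> {a..b} (amove \<sigma> P) {c..c + \<beta> * L}" for c
  proof -
    have "bob_move \<beta> (bx P) (amove \<sigma> P) {c..c + \<beta> * L}" using that box by simp
    then have "bx (stepA \<sigma> P {c..c + \<beta> * L}) = {c..c + \<beta> * L}" using stepA_props[OF strat v(1)] by blast
    then show ?thesis unfolding co_def using bL by simp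
  qed
  have g: "(\<exists>X. bob_move \<beta> {a..b} (amove \<sigma> P) X \<and> p \<notin> X)
    \<or> (w * (b - a) \<le> p - a \<and> p - a \<le> \<beta> * (b - a) \<and>
        (\<forall>c. a \<le> c \<and> c \<le> a + w * (b - a) \<longrightarrow> bob_move \<beta> {a..b} (amove \<sigma> P) {c..c + \<beta> * (b - a)}))
    \<or> (w * (b - a) \<le> b - p \<and> b - p \<le> \<beta> * (b - a) \<and>
        (\<forall>c. b - \<beta> * (b - a) - w * (b - a) \<le> c \<and> c \<le> b - \<beta> * (b - a) \<longrightarrow> bob_move \<beta> {a..b} (amove \<sigma> P) {c..c + \<beta> * (b - a)}))"
    using geom[OF b0 b3 box(2) am pab] unfolding w_def by blast
  show ?thesis
  proof -
    { assume "\<exists>X. bob_move \<beta> {a..b} (amove \<sigma> P) X \<and> p \<notin> X"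
      then obtain X where X: "bob_move \<beta> {a..b} (amove \<sigma> P) X" "p \<notin> X" by blast
      have "bob_move \<beta> (bx P) (amove \<sigma> P) X" using X box by simp
      then have "bx (stepA \<sigma> P X) = X" using stepA_props[OF strat v(1)] by blast
      moreover have "Stuck \<beta> \<sigma> p k (stepA \<sigma> P X)" using st X by blast
      ultimately have False using Stuck_D X(2) by metis
      then have ?thesis by blast }
    moreover
    { assume h: "w * (b - a) \<le> p - a \<and> p - a \<le> \<beta> * (b - a) \<and>
        (\<forall>c. a \<le> c \<and> c \<le> a + w * (b - a) \<longrightarrow> bob_move \<beta> {a..b} (amove \<sigma> P) {c..c + \<beta> * (b - a)})"
      have h1: "w * L \<le> t * L" "t * L \<le> \<beta> * L" using h tL L_def by auto
      have t1: "w \<le> t" "t \<le> \<beta>" using h1 L0 by auto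
      have "\<forall>y. t / \<beta> - w / \<beta> \<le> y \<and> y \<le> t / \<beta> \<longrightarrow> y \<in> NN \<beta> \<sigma> p k"
      proof (intro allI impI)
        fix y assume y: "t / \<beta> - w / \<beta> \<le> y \<and> y \<le> t / \<beta>"
        have "(t - w) / \<beta> + 0 \<le> y" using y by (simp add: diff_divide_distrib)
        then have y1: "t - w \<le> \<beta> * y" using div_le_iff2[OF b0, of "t - w" 0 y] by simp
        have "y \<le> t / \<beta> + 0" using y by simp
        then have y2: "\<beta> * y \<le> t" using div_le_iff1[OF b0, of y t 0] by simp
        have z1: "(t - w) * L \<le> (\<beta> * y) * L" using y1 L0 by (simp add: mult_right_mono)
        have z2: "(\<beta> * y) * L \<le> t * L" using y2 L0 by (simp add: mult_right_mono)
        define c where "c = p - (\<beta> * y) * L"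
        have c1: "a \<le> c" "c \<le> a + w * L" using z1 z2 tL unfolding c_def by (auto simp: algebra_simps)
        have bm: "bob_move \<beta> {a..b} (amove \<sigma> P) {c..c + \<beta> * L}" using h c1 L_def by simp
        have "co p (stepA \<sigma> P {c..c + \<beta> * L}) = y" using coX[OF bm] bL b0 L0 unfolding c_def by simp
        then show "y \<in> NN \<beta> \<sigma> p k" using stepX[OF bm] by simp
      qed
      then have ?thesis using t1 by blast }
    moreover
    { assume h: "w * (b - a) \<le> b - p \<and> b - p \<le> \<beta> * (b - a) \<and>
        (\<forall>c. b - \<beta> * (b - a) - w * (b - a) \<le> c \<and> c \<le> b - \<beta> * (b - a) \<longrightarrow> bob_move \<beta> {a..b} (amove \<sigma> P) {c..c + \<beta> * (b - a)})"
      have "(1 - t) * L = L - t * L" by (simp add: algebra_simps)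
      then have utL: "(1 - t) * L = b - p" using tL L_def by simp
      have h1: "w * L \<le> (1 - t) * L" "(1 - t) * L \<le> \<beta> * L" using h utL L_def by auto
      have t1: "w \<le> 1 - t" "1 - t \<le> \<beta>" using h1 L0 by auto
      have "\<forall>y. 1 - (1 - t) / \<beta> \<le> y \<and> y \<le> 1 - (1 - t) / \<beta> + w / \<beta> \<longrightarrow> y \<in> NN \<beta> \<sigma> p k"
      proof (intro allI impI)
        fix y assume y: "1 - (1 - t) / \<beta> \<le> y \<and> y \<le> 1 - (1 - t) / \<beta> + w / \<beta>"
        have "(t - 1) / \<beta> + 1 \<le> y" using y by (simp add: diff_divide_distrib)
        then have y1: "t - 1 + \<beta> \<le> \<beta> * y" using div_le_iff2[OF b0, of "t - 1" 1 y] by simp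
        have "y \<le> (t - 1 + w) / \<beta> + 1" using y by (simp add: diff_divide_distrib add_divide_distrib)
        then have y2: "\<beta> * y \<le> t - 1 + w + \<beta>" using div_le_iff1[OF b0, of y "t - 1 + w" 1] by simp
        have z1: "(t - 1 + \<beta>) * L \<le> (\<beta> * y) * L" using y1 L0 by (simp add: mult_right_mono)
        have z2: "(\<beta> * y) * L \<le> (t - 1 + w + \<beta>) * L" using y2 L0 by (simp add: mult_right_mono)
        define c where "c = p - (\<beta> * y) * L"
        have c1: "b - \<beta> * L - w * L \<le> c" "c \<le> b - \<beta> * L" using z1 z2 utL unfolding c_def by (auto simp: algebra_simps)
        have bm: "bob_move \<beta> {a..b} (amove \<sigma> P) {c..c + \<beta> * L}" using h c1 L_def by simp
        have "co p (stepA \<sigma> P {c..c + \<beta> * L}) = y" using coX[OF bm] bL b0 L0 unfolding c_def by simp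
        then show "y \<in> NN \<beta> \<sigma> p k" using stepX[OF bm] by simp
      qed
      then have ?thesis using t1 by auto }
    ultimately show ?thesis using g by blast
  qed
qed

end



context actx begin

lemma NN_interval:
  assumes d: "0 \<le> \<delta>" and sub: "{x..x + \<delta>} \<subseteq> NN \<beta> \<sigma> p (Suc k)"
  shows "\<exists>x'. {x'..x' + \<delta> + w} \<subseteq> NN \<beta> \<sigma> p k"
proof -
  have wp: "0 < w" by (rule w_pos)
  have b1: "\<beta> < 1 - \<beta>" using b3 by simp
  have half: "\<beta> < 1/2" "1/2 < 1 - \<beta>" using b3 by auto
  have xin: "x \<in> NN \<beta> \<sigma> p (Suc k)" using sub d by auto
  have xdin: "x + \<delta> \<in> NN \<beta> \<sigma> p (Suc k)" using sub d by auto
  have bd: "\<beta> * \<delta> \<le> \<delta>" "\<beta> * w \<le> w" using mult_right_mono[of \<beta> 1 \<delta>] mult_right_mono[of \<beta> 1 w] d wp b3 by simp_all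
  note sx = stuck_step[OF xin]
  show ?thesis
  proof (cases "x \<le> \<beta>")
    case True
    have xd: "x + \<delta> \<le> \<beta>"
    proof (rule ccontr)
      assume "\<not> x + \<delta> \<le> \<beta>"
      then have "1 - \<beta> \<le> x + \<delta>" using stuck_step[OF xdin] by auto
      then have "1/2 \<in> {x..x + \<delta>}" using True half by auto
      then have "1/2 \<in> NN \<beta> \<sigma> p (Suc k)" using sub by blast
      from stuck_step[OF this] show False using half by auto
    qed
    define x' where "x' = (x - w) / \<beta>"
    have "{x'..x' + \<delta> + w} \<subseteq> NN \<beta> \<sigma> p k"
    proof
      fix y assume y: "y \<in> {x'..x' + \<delta> + w}"
      have "(x - w) / \<beta> + 0 \<le> y" using y x'_def by simp
      then have z1: "x - w \<le> \<beta> * y" using div_le_iff2[OF b0, of "x - w" 0 y] by simp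
      have "y \<le> (x - w) / \<beta> + (\<delta> + w)" using y x'_def by simp
      then have z2: "\<beta> * y \<le> x - w + \<beta> * (\<delta> + w)" using div_le_iff1[OF b0, of y "x - w" "\<delta> + w"] by simp
      define t where "t = max x (min (x + \<delta>) (\<beta> * y))"
      have tin: "t \<in> {x..x + \<delta>}" unfolding t_def using d by auto
      have tb: "t \<le> \<beta>" using tin xd by auto
      have tn: "t \<in> NN \<beta> \<sigma> p (Suc k)" using tin sub by blast
      have st: "\<forall>y. t / \<beta> - w / \<beta> \<le> y \<and> y \<le> t / \<beta> \<longrightarrow> y \<in> NN \<beta> \<sigma> p k"
        using stuck_step[OF tn] tb b1 by auto
      have "\<beta> * (\<delta> + w) = \<beta> * \<delta> + \<beta> * w" by (simp add: algebra_simps)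
      then have zz: "\<beta> * y \<le> x + \<delta>" using z2 bd by linarith
      have e1: "t - w \<le> \<beta> * y" "\<beta> * y \<le> t"
        using z1 zz wp unfolding t_def by (auto simp: max_def min_def)
      have "(t - w) / \<beta> + 0 \<le> y" using div_le_iff2[OF b0, of "t - w" 0 y] e1 by simp
      moreover have "y \<le> t / \<beta> + 0" using div_le_iff1[OF b0, of y t 0] e1 by simp
      ultimately show "y \<in> NN \<beta> \<sigma> p k" using st by (simp add: diff_divide_distrib)
    qed
    then show ?thesis by blast
  next
    case False
    then have x1: "1 - \<beta> \<le> x" using sx by auto
    define x' where "x' = (x - 1) / \<beta> + 1"
    have "{x'..x' + \<delta> + w} \<subseteq> NN \<beta> \<sigma> p k"
    proof
      fix y assume y: "y \<in> {x'..x' + \<delta> + w}"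
      have "(x - 1) / \<beta> + 1 \<le> y" using y x'_def by simp
      then have z1: "x - 1 + \<beta> \<le> \<beta> * y" using div_le_iff2[OF b0, of "x - 1" 1 y] by simp
      have "y \<le> (x - 1) / \<beta> + (1 + \<delta> + w)" using y x'_def by simp
      then have z2: "\<beta> * y \<le> x - 1 + \<beta> * (1 + \<delta> + w)" using div_le_iff1[OF b0, of y "x - 1" "1 + \<delta> + w"] by simp
      define t where "t = min (x + \<delta>) (\<beta> * y + 1 - \<beta>)"
      have tin: "t \<in> {x..x + \<delta>}" unfolding t_def using d z1 by auto
      have tb: "\<beta> < t" using tin x1 b1 by auto
      have tn: "t \<in> NN \<beta> \<sigma> p (Suc k)" using tin sub by blast
      have st: "\<forall>y. 1 - (1 - t) / \<beta> \<le> y \<and> y \<le> 1 - (1 - t) / \<beta> + w / \<beta> \<longrightarrow> y \<in> NN \<beta> \<sigma> p k"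
        using stuck_step[OF tn] tb by auto
      have "\<beta> * (1 + \<delta> + w) = \<beta> + \<beta> * \<delta> + \<beta> * w" by (simp add: algebra_simps)
      then have zz: "\<beta> * y \<le> x - 1 + \<beta> + \<delta> + w" using z2 bd by linarith
      have e1: "t - 1 + \<beta> \<le> \<beta> * y" "\<beta> * y \<le> t - 1 + w + \<beta>"
        using z1 zz wp unfolding t_def by (auto simp: min_def)
      have "(t - 1) / \<beta> + 1 \<le> y" using div_le_iff2[OF b0, of "t - 1" 1 y] e1 by simp
      moreover have "y \<le> (t - 1 + w) / \<beta> + 1" using div_le_iff1[OF b0, of y "t - 1 + w" 1] e1 by simp
      ultimately show "y \<in> NN \<beta> \<sigma> p k" using st by (simp add: diff_divide_distrib add_divide_distrib)
    qed
    then show ?thesis by blast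
  qed
qed

lemma NN_iter:
  "0 \<le> \<delta> \<Longrightarrow> {x..x + \<delta>} \<subseteq> NN \<beta> \<sigma> p (k + j) \<Longrightarrow> \<exists>x'. {x'..x' + \<delta> + real j * w} \<subseteq> NN \<beta> \<sigma> p k"
proof (induction j arbitrary: k)
  case 0 then show ?case by auto
next
  case (Suc j)
  have "k + Suc j = Suc k + j" by simp
  then have "{x..x + \<delta>} \<subseteq> NN \<beta> \<sigma> p (Suc k + j)" using Suc.prems by simp
  then obtain x'' where x'': "{x''..x'' + \<delta> + real j * w} \<subseteq> NN \<beta> \<sigma> p (Suc k)" using Suc.IH Suc.prems(1) by blast
  have "0 \<le> \<delta> + real j * w" using Suc.prems(1) w_pos by simp
  then obtain x' where "{x'..x' + (\<delta> + real j * w) + w} \<subseteq> NN \<beta> \<sigma> p k"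
    using NN_interval[of "\<delta> + real j * w" x'' p k] x'' by (auto simp: add.assoc)
  then show ?case by (intro exI[of _ x']) (simp add: algebra_simps)
qed

lemma never_stuck: "\<exists>J. \<forall>P. \<not> Stuck \<beta> \<sigma> p J P"
proof -
  obtain J :: nat where J: "1 < real J * w" using reals_Archimedean3[OF w_pos] by blast
  have "\<not> Stuck \<beta> \<sigma> p J P" for P
  proof
    assume "Stuck \<beta> \<sigma> p J P"
    then have "co p P \<in> NN \<beta> \<sigma> p J" unfolding NN_def by blast
    then have "co p P \<in> NN \<beta> \<sigma> p (0 + J)" by simp
    then have "{co p P..co p P + 0} \<subseteq> NN \<beta> \<sigma> p (0 + J)" by simp
    then obtain x' where x': "{x'..x' + 0 + real J * w} \<subseteq> NN \<beta> \<sigma> p 0" using NN_iter[of 0] by blast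
    have "x' \<in> NN \<beta> \<sigma> p 0" "x' + real J * w \<in> NN \<beta> \<sigma> p 0" using x' w_pos by auto
    then have "0 \<le> x'" "x' + real J * w \<le> 1" using NN_01 by blast+
    then show False using J by linarith
  qed
  then show ?thesis by blast
qed

lemma extract_esc:
  "validA \<beta> \<sigma> P \<Longrightarrow> \<not> Stuck \<beta> \<sigma> p k P \<Longrightarrow> \<exists>Q. (Q = P \<or> ext P Q) \<and> validA \<beta> \<sigma> Q \<and> p \<notin> bx Q"
proof (induction k arbitrary: P)
  case 0
  then have "p \<notin> bx P" by simp
  then show ?case using 0 by blast
next
  case (Suc k)
  show ?case
  proof (cases "p \<in> bx P")
    case False then show ?thesis using Suc.prems by blast
  next
    case True
    then obtain X where X: "bob_move \<beta> (bx P) (amove \<sigma> P) X" "\<not> Stuck \<beta> \<sigma> p k (stepA \<sigma> P X)"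
      using Suc.prems by auto
    note sp = stepA_props[OF strat Suc.prems(1) X(1)]
    obtain Q where Q: "Q = stepA \<sigma> P X \<or> ext (stepA \<sigma> P X) Q" "validA \<beta> \<sigma> Q" "p \<notin> bx Q"
      using Suc.IH[of "stepA \<sigma> P X"] sp X(2) by blast
    have "ext P Q" using Q(1) sp ext_trans by blast
    then show ?thesis using Q by blast
  qed
qed

lemma bob_exists:
  assumes v: "validA \<beta> \<sigma> P"
  shows "\<exists>X. bob_move \<beta> (bx P) (amove \<sigma> P) X"
proof -
  have lg: "legalP \<beta> P" using v unfolding validA_def by blast
  define a where "a = Inf (bx P)"
  define b where "b = Sup (bx P)"
  have box: "bx P = {a..b}" "a < b" using legalP_box[OF lg] unfolding a_def b_def by auto
  have am: "alice_move \<beta> {a..b} (amove \<sigma> P)" using amove_legal[OF strat v] box by simp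
  have wL: "0 \<le> w * (b - a)" using w_pos box by simp
  have "(\<exists>X. bob_move \<beta> {a..b} (amove \<sigma> P) X \<and> a \<notin> X)
    \<or> (w * (b - a) \<le> a - a \<and> a - a \<le> \<beta> * (b - a) \<and>
        (\<forall>c. a \<le> c \<and> c \<le> a + w * (b - a) \<longrightarrow> bob_move \<beta> {a..b} (amove \<sigma> P) {c..c + \<beta> * (b - a)}))
    \<or> (w * (b - a) \<le> b - a \<and> b - a \<le> \<beta> * (b - a) \<and>
        (\<forall>c. b - \<beta> * (b - a) - w * (b - a) \<le> c \<and> c \<le> b - \<beta> * (b - a) \<longrightarrow> bob_move \<beta> {a..b} (amove \<sigma> P) {c..c + \<beta> * (b - a)}))"
    using geom[OF b0 b3 box(2) am, of a] box(2) unfolding w_def by simp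
  then have "\<exists>X. bob_move \<beta> {a..b} (amove \<sigma> P) X"
  proof (elim disjE)
    assume h: "w * (b - a) \<le> a - a \<and> a - a \<le> \<beta> * (b - a) \<and>
        (\<forall>c. a \<le> c \<and> c \<le> a + w * (b - a) \<longrightarrow> bob_move \<beta> {a..b} (amove \<sigma> P) {c..c + \<beta> * (b - a)})"
    show ?thesis using h[THEN conjunct2, THEN conjunct2, rule_format, of a] wL by auto
  next
    assume h: "w * (b - a) \<le> b - a \<and> b - a \<le> \<beta> * (b - a) \<and>
        (\<forall>c. b - \<beta> * (b - a) - w * (b - a) \<le> c \<and> c \<le> b - \<beta> * (b - a) \<longrightarrow> bob_move \<beta> {a..b} (amove \<sigma> P) {c..c + \<beta> * (b - a)})"
    show ?thesis using h[THEN conjunct2, THEN conjunct2, rule_format, of "b - \<beta> * (b - a)"] wL by auto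
  qed blast
  then show ?thesis using box by simp
qed

lemma escape:
  assumes v: "validA \<beta> \<sigma> P"
  shows "\<exists>Q. ext P Q \<and> validA \<beta> \<sigma> Q \<and> p \<notin> bx Q"
proof -
  obtain J where J: "\<forall>P. \<not> Stuck \<beta> \<sigma> p J P" using never_stuck by blast
  obtain Q0 where Q0: "Q0 = P \<or> ext P Q0" "validA \<beta> \<sigma> Q0" "p \<notin> bx Q0"
    using extract_esc[OF v, of p J] J by blast
  obtain X where X: "bob_move \<beta> (bx Q0) (amove \<sigma> Q0) X" using bob_exists[OF Q0(2)] by blast
  note sp = stepA_props[OF strat Q0(2) X]
  have "bx (stepA \<sigma> Q0 X) \<subseteq> bx Q0" using sp X unfolding bob_move_def by auto
  then have "p \<notin> bx (stepA \<sigma> Q0 X)" using Q0(3) by blast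
  moreover have "ext P (stepA \<sigma> Q0 X)" using Q0(1) sp ext_trans by blast
  ultimately show ?thesis using sp by blast
qed

lemma separation:
  assumes v: "validA \<beta> \<sigma> P"
  shows "\<exists>Q1 Q2. validA \<beta> \<sigma> Q1 \<and> ext P Q1 \<and> validA \<beta> \<sigma> Q2 \<and> ext P Q2 \<and> bx Q1 \<inter> bx Q2 = {}"
proof (rule ccontr)
  assume "\<not> ?thesis"
  then have H: "\<And>Q1 Q2. validA \<beta> \<sigma> Q1 \<Longrightarrow> ext P Q1 \<Longrightarrow> validA \<beta> \<sigma> Q2 \<Longrightarrow> ext P Q2 \<Longrightarrow> bx Q1 \<inter> bx Q2 \<noteq> {}"
    by blast
  define R where "R = {Q. validA \<beta> \<sigma> Q \<and> ext P Q}"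
  obtain Q0 where Q0: "Q0 \<in> R" using escape[OF v, of 0] unfolding R_def by blast
  have boxR: "bx Q = {Inf (bx Q)..Sup (bx Q)}" if "Q \<in> R" for Q
    using that legalP_box unfolding R_def validA_def by blast
  have lohi: "Inf (bx Q1) \<le> Sup (bx Q2)" if "Q1 \<in> R" "Q2 \<in> R" for Q1 Q2
  proof -
    have "bx Q1 \<inter> bx Q2 \<noteq> {}" using H that unfolding R_def by blast
    then obtain y where y: "y \<in> bx Q1" "y \<in> bx Q2" by blast
    have "Inf (bx Q1) \<le> y" using y(1) boxR[OF that(1)] by (metis atLeastAtMost_iff)
    moreover have "y \<le> Sup (bx Q2)" using y(2) boxR[OF that(2)] by (metis atLeastAtMost_iff)
    ultimately show ?thesis by linarith
  qed
  define ps where "ps = Sup ((\<lambda>Q. Inf (bx Q)) ` R)"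
  have bdd: "bdd_above ((\<lambda>Q. Inf (bx Q)) ` R)"
    using lohi Q0 unfolding bdd_above_def by blast
  have ne: "(\<lambda>Q. Inf (bx Q)) ` R \<noteq> {}" using Q0 by blast
  have inbox: "ps \<in> bx Q" if "Q \<in> R" for Q
  proof -
    have "Inf (bx Q) \<le> ps" unfolding ps_def using bdd that by (simp add: cSup_upper)
    moreover have "ps \<le> Sup (bx Q)" unfolding ps_def
    proof (rule cSup_least[OF ne])
      fix z assume "z \<in> (\<lambda>Q. Inf (bx Q)) ` R"
      then obtain Q' where "Q' \<in> R" "z = Inf (bx Q')" by blast
      then show "z \<le> Sup (bx Q)" using lohi that by blast
    qed
    ultimately show ?thesis by (subst boxR[OF that]) simp
  qed
  obtain Q where Q: "ext P Q" "validA \<beta> \<sigma> Q" "ps \<notin> bx Q" using escape[OF v, of ps] by blast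
  then show False using inbox[of Q] unfolding R_def by blast
qed

end



definition sepP :: "real \<Rightarrow> (real set list \<Rightarrow> real set) \<Rightarrow> pos \<Rightarrow> pos \<times> pos \<Rightarrow> bool" where
  "sepP \<beta> \<sigma> P QQ \<longleftrightarrow> validA \<beta> \<sigma> (fst QQ) \<and> ext P (fst QQ) \<and> validA \<beta> \<sigma> (snd QQ) \<and> ext P (snd QQ)
     \<and> bx (fst QQ) \<inter> bx (snd QQ) = {}"

definition chA :: "real \<Rightarrow> (real set list \<Rightarrow> real set) \<Rightarrow> bool \<Rightarrow> pos \<Rightarrow> pos" where
  "chA \<beta> \<sigma> b P = (if b then fst (SOME QQ. sepP \<beta> \<sigma> P QQ) else snd (SOME QQ. sepP \<beta> \<sigma> P QQ))"

definition P0A :: pos where "P0A = (\<lambda>_. {0..1}, \<lambda>_. {}, 0)"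

lemma (in actx) alice_tree: "tree \<beta> (validA \<beta> \<sigma>) (chA \<beta> \<sigma>) P0A"
proof
  show "validA \<beta> \<sigma> P0A"
    unfolding validA_def legalP_def legal_upto_def P0A_def pB_def pA_def lv_def cpt_interval_def
    by (intro conjI exI[of _ 0] exI[of _ 1]) auto
next
  fix P assume v: "validA \<beta> \<sigma> P"
  then show "legalP \<beta> P" unfolding validA_def by simp
  have "\<exists>QQ. sepP \<beta> \<sigma> P QQ"
  proof -
    obtain Q1 Q2 where "validA \<beta> \<sigma> Q1 \<and> ext P Q1 \<and> validA \<beta> \<sigma> Q2 \<and> ext P Q2 \<and> bx Q1 \<inter> bx Q2 = {}"
      using separation[OF v] by blast
    then have "sepP \<beta> \<sigma> P (Q1, Q2)" unfolding sepP_def by simp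
    then show ?thesis by blast
  qed
  then have s: "sepP \<beta> \<sigma> P (SOME QQ. sepP \<beta> \<sigma> P QQ)" by (rule someI_ex)
  fix b
  show "validA \<beta> \<sigma> (chA \<beta> \<sigma> b P) \<and> ext P (chA \<beta> \<sigma> b P)"
    using s unfolding chA_def sepP_def by (cases b) auto
  show "bx (chA \<beta> \<sigma> True P) \<inter> bx (chA \<beta> \<sigma> False P) = {}"
    using s unfolding chA_def sepP_def by simp
qed

lemma ilen_pow: "(\<And>n. legal_upto \<beta> B A n) \<Longrightarrow> ilen (B n) = \<beta> ^ n * ilen (B 0)"
proof (induction n)
  case 0 then show ?case by simp
next
  case (Suc n)
  have "bob_move \<beta> (B n) (A n) (B (Suc n))" using Suc.prems[of "Suc n"] unfolding legal_upto_def by simp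
  then have "ilen (B (Suc n)) = \<beta> * ilen (B n)" unfolding bob_move_def by simp
  then show ?case using Suc by simp
qed

lemma alice_not_winning:
  assumes b0: "0 < \<beta>" and b3: "\<beta> < 1/3" and bern: "bernstein_set S"
  shows "\<not> alice_winning \<beta> S \<sigma>"
proof
  assume aw: "alice_winning \<beta> S \<sigma>"
  then have st: "alice_strategy \<beta> \<sigma>" unfolding alice_winning_def by blast
  interpret actx \<beta> \<sigma> using b0 b3 st by unfold_locales
  interpret T: tree \<beta> "validA \<beta> \<sigma>" "chA \<beta> \<sigma>" P0A by (rule alice_tree)
  have H: "\<forall>C. closed C \<and> uncountable C \<longrightarrow> \<not> C \<subseteq> S" using bern unfolding bernstein_set_def by (rule conjunct2)
  have "\<not> T.CC \<subseteq> S" using H[rule_format, of T.CC] T.CC_closed T.CC_uncountable by blast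
  then obtain x where x: "x \<notin> S" "x \<in> T.CC" by blast
  obtain f where f: "\<And>k. x \<in> bx (Tr (chA \<beta> \<sigma>) P0A (pre f k))"
    using T.CC_branch[OF x(2)] by blast
  define Q where "Q k = Tr (chA \<beta> \<sigma>) P0A (pre f k)" for k
  have ch: "\<And>k. ext (Q k) (Q (Suc k))" unfolding Q_def using T.Tr_ext by simp
  have vQ: "\<And>k. validA \<beta> \<sigma> (Q k)" unfolding Q_def using T.TrV by simp
  have lg: "\<And>k. legalP \<beta> (Q k)" using vQ unfolding validA_def by blast
  define LB where "LB \<equiv> \<lambda>i. pB (Q i) i"
  define LA where "LA \<equiv> \<lambda>i. pA (Q (Suc i)) i"
  note pl = play_from_chain[of Q \<beta>, OF ch lg, folded LB_def LA_def]
  have agB: "LB i = pB (Q m) i" if "i \<le> m" for i m using pl(5)[OF that] unfolding LB_def by simp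
  have agA: "LA i = pA (Q m) i" if "i < m" for i m using pl(6)[OF that] unfolding LA_def by simp
  have cons: "LA n = \<sigma> (hist LB LA n @ [LB n])" for n
  proof -
    have "n < lv (Q (Suc n))" using pl(4)[of "Suc n"] by simp
    then have e: "pA (Q (Suc n)) n = \<sigma> (hist (pB (Q (Suc n))) (pA (Q (Suc n))) n @ [pB (Q (Suc n)) n])"
      using vQ[of "Suc n"] unfolding validA_def by blast
    have "hist LB LA n = hist (pB (Q (Suc n))) (pA (Q (Suc n))) n"
    proof (rule hist_cong)
      fix i assume "i < n"
      then show "LB i = pB (Q (Suc n)) i" by (intro agB) simp
      show "LA i = pA (Q (Suc n)) i" using \<open>i < n\<close> by (intro agA) simp
    qed
    moreover have "LB n = pB (Q (Suc n)) n" by (intro agB) simp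
    moreover have "LA n = pA (Q (Suc n)) n" by (intro agA) simp
    ultimately show ?thesis using e by simp
  qed
  have xin: "x \<in> LB n" for n
  proof -
    have "bx (Q n) \<subseteq> LB n" using pl(2)[of n] by (simp add: LB_def)
    moreover have "x \<in> bx (Q n)" unfolding Q_def by (rule f)
    ultimately show ?thesis by blast
  qed
  have H2: "\<forall>B A. legal_play \<beta> B A \<and> (\<forall>n. A n = \<sigma> (hist B A n @ [B n]))
        \<longrightarrow> (\<Inter>n. B n) \<inter> S \<noteq> {}" using aw unfolding alice_winning_def by (rule conjunct2)
  have cons': "\<forall>n. LA n = \<sigma> (hist LB LA n @ [LB n])" using cons by blast
  have prem: "legal_play \<beta> LB LA \<and> (\<forall>n. LA n = \<sigma> (hist LB LA n @ [LB n]))" using pl(1) cons' by blast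
  have "(\<Inter>n. LB n) \<inter> S \<noteq> {}" using H2 prem by blast
  then obtain y where y: "y \<in> S" "\<And>n. y \<in> LB n" by blast
  have lgall: "\<And>n. legal_upto \<beta> LB LA n" using pl(1) unfolding legal_play_def by blast
  have dist: "\<bar>x - y\<bar> \<le> \<beta> ^ n * ilen (LB 0)" for n
  proof -
    have "cpt_interval (LB n)" using legal_box[OF lgall[of n]] .
    then obtain a b where ab: "a < b" "LB n = {a..b}" unfolding cpt_interval_def by blast
    have "\<bar>x - y\<bar> \<le> b - a" using xin[of n] y(2)[of n] ab by auto
    also have "b - a = ilen (LB n)" using ab by (simp add: ilen_def)
    also have "\<dots> = \<beta> ^ n * ilen (LB 0)" using ilen_pow[of \<beta> LB LA n] lgall by blast
    finally show ?thesis .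
  qed
  have L0: "0 < ilen (LB 0)"
  proof -
    have "cpt_interval (LB 0)" using legal_box[OF lgall[of 0]] .
    then obtain a b where ab: "a < b" "LB 0 = {a..b}" unfolding cpt_interval_def by blast
    then show ?thesis by (simp add: ilen_def)
  qed
  have "x = y"
  proof (rule ccontr)
    assume "x \<noteq> y"
    then have "0 < \<bar>x - y\<bar> / ilen (LB 0)" using L0 by simp
    then obtain n where n: "\<beta> ^ n < \<bar>x - y\<bar> / ilen (LB 0)" using real_arch_pow_inv[of _ \<beta>] b3 by fastforce
    then have "\<beta> ^ n * ilen (LB 0) < \<bar>x - y\<bar>" using L0 by (simp add: pos_less_divide_eq)
    then show False using dist[of n] by linarith
  qed
  then show False using x(1) y(1) by simp
qed

theorem theorem2':
  fixes \<beta> :: real and S :: "real set"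
  assumes "0 < \<beta>" and "\<beta> < 1/3" and "bernstein_set S"
  shows "\<not> abs_game_determined \<beta> S"
proof -
  have "\<beta> < 1" using assms(2) by simp
  then show ?thesis unfolding abs_game_determined_def
    using alice_not_winning[OF assms] bob_not_winning[OF assms(1) _ assms(3)] by blast
qed



theorem theorem2:
  fixes \<beta> :: real and S :: "real set"
  assumes "0 < \<beta>" and "\<beta> < 1/3" and "bernstein_set S"
  shows "\<not> abs_game_determined \<beta> S"
  using theorem2'[OF assms] .

end
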